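(* Let $r>0$ and let $f:(0,r)\to(0,\infty)$ be a nondecreasing function such that $f(x)<x$ for all $x\in(0,r)$ and, for every $\alpha>1$, $f(x)=O(x^\alpha)$ as $x\to0^+$. For $x_1\in(0,r)$ let $x_{n+1}=x_n-f(x_n)$ and $S=\{x_n:n\ge1\}$. Then $\dim_BS=1$.
   Context: For a bounded set $S\subset\mathbb{R}$ and $\varepsilon>0$, $S_\varepsilon=\{y: \mathrm{dist}(y,S)<\varepsilon\}$ and $|S_\varepsilon|$ is its Lebesgue measure. $\mathcal M^{*s}(S)=\limsup_{\varepsilon\to0}|S_\varepsilon|/\varepsilon^{1-s}$, $\mathcal M_*^{s}(S)=\liminf_{\varepsilon\to0}|S_\varepsilon|/\varepsilon^{1-s}$; $\overline{\dim}_BS=\inf\{s\ge0:\mathcal M^{*s}(S)=0\}$, $\underline{\dim}_BS=\inf\{s\ge0:\mathcal M_*^{s}(S)=0\}$, and $\dim_BS$ is their common value when equal. *)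

theory Defs
  imports "HOL-Analysis.Analysis" "HOL-Library.Landau_Symbols"
begin

definition nbhd :: "real set \<Rightarrow> real \<Rightarrow> real set" where
  "nbhd S e = {y. infdist y S < e}"

definition upper_mink :: "real \<Rightarrow> real set \<Rightarrow> ereal" where
  "upper_mink s S = Limsup (at_right 0) (\<lambda>e. ereal (measure lborel (nbhd S e) / e powr (1 - s)))"

definition lower_mink :: "real \<Rightarrow> real set \<Rightarrow> ereal" where
  "lower_mink s S = Liminf (at_right 0) (\<lambda>e. ereal (measure lborel (nbhd S e) / e powr (1 - s)))"

definition upper_box_dim :: "real set \<Rightarrow> real" where
  "upper_box_dim S = Inf {s. s \<ge> 0 \<and> upper_mink s S = 0}"

definition lower_box_dim :: "real set \<Rightarrow> real" where
  "lower_box_dim S = Inf {s. s \<ge> 0 \<and> lower_mink s S = 0}"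

definition has_box_dim :: "real set \<Rightarrow> real \<Rightarrow> bool" where
  "has_box_dim S d \<longleftrightarrow> upper_box_dim S = d \<and> lower_box_dim S = d"

end

theory Submission
  imports Defs
begin

lemma Ioc_fmeas: "{a<..b::real} \<in> fmeasurable lborel"
  by (rule fmeasurableI2[OF fmeasurable_cbox[of a b]]) auto

locale seqsetup =
  fixes r :: real and f :: "real \<Rightarrow> real" and z :: "nat \<Rightarrow> real"
  assumes r: "r > 0"
    and fpos: "\<forall>t\<in>{0<..<r}. 0 < f t \<and> f t < t"
    and fmono: "mono_on {0<..<r} f"
    and z0: "z 0 \<in> {0<..<r}"
    and zS: "\<And>n. z (Suc n) = z n - f (z n)"
begin

lemma z_in: "z n \<in> {0<..<r}"
proof (induction n)
  case 0 then show ?case using z0 by simp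
next
  case (Suc n)
  then have "0 < f (z n)" "f (z n) < z n" using fpos by auto
  then show ?case using Suc zS[of n] by auto
qed

lemma z_dec: "z (Suc n) < z n"
  using z_in[of n] fpos zS[of n] by auto

lemma z_anti: "m \<le> n \<Longrightarrow> z n \<le> z m"
  using lift_Suc_antimono_le[of z] z_dec less_imp_le by blast

lemma z_small: assumes "e > 0" shows "\<exists>n. z n < e"
proof (rule ccontr)
  assume "\<not> ?thesis"
  then have ge: "\<And>n. e \<le> z n" by (simp add: not_less)
  have er: "e \<in> {0<..<r}" using ge[of 0] z0 assms by auto
  have fe: "f e > 0" using fpos er by auto
  have step: "\<And>n. f e \<le> f (z n)"
    using mono_onD[OF fmono er z_in] ge by blast
  have bound: "\<And>n. z n \<le> z 0 - real n * f e"
  proof -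
    fix n show "z n \<le> z 0 - real n * f e"
    proof (induction n)
      case 0 then show ?case by simp
    next
      case (Suc n) then show ?case using zS[of n] step[of n] by (simp add: algebra_simps)
    qed
  qed
  obtain n where "z 0 < real n * f e" using ex_less_of_nat_mult[OF fe] by blast
  then show False using bound[of n] ge[of n] assms by linarith
qed

lemma bracket:
  assumes "0 < y" "y \<le> z K"
  shows "\<exists>k\<ge>K. z (Suc k) < y \<and> y \<le> z k"
proof -
  obtain m where "z m < y" using z_small[OF assms(1)] by blast
  moreover have "\<not> z 0 < y" using z_anti[of 0 K] assms by auto
  ultimately obtain k where k: "\<not> z k < y" "z (Suc k) < y"
    using exists_least_lemma[of "\<lambda>n. z n < y"] by blast
  have "k \<ge> K"
  proof (rule ccontr)
    assume "\<not> k \<ge> K"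
    then have "Suc k \<le> K" by simp
    then show False using z_anti[of "Suc k" K] k assms by auto
  qed
  then show ?thesis using k by auto
qed

lemma infdist_obtain:
  assumes "infdist y (range z) < e"
  shows "\<exists>n. dist y (z n) < e"
proof -
  have "Inf (dist y ` range z) < e" using assms by (simp add: infdist_def)
  then obtain d where "d \<in> dist y ` range z" "d < e"
    using cInf_lessD[of "dist y ` range z" e] by blast
  then show ?thesis by auto
qed

lemma nbhd_sets: "nbhd (range z) e \<in> sets lborel"
proof -
  have "open {y. infdist y (range z) < e}"
    by (rule open_Collect_less) (auto intro!: continuous_on_infdist continuous_on_id)
  then show ?thesis unfolding nbhd_def by simp
qed

lemma nbhd_fmeas: assumes "e > 0" shows "nbhd (range z) e \<in> fmeasurable lborel"
proof -
  have "nbhd (range z) e \<subseteq> cbox (-e) (r+e)"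
  proof
    fix y assume "y \<in> nbhd (range z) e"
    then obtain n where "dist y (z n) < e" using infdist_obtain unfolding nbhd_def by blast
    then show "y \<in> cbox (-e) (r+e)" using z_in[of n] by (auto simp: dist_real_def)
  qed
  then show ?thesis using fmeasurableI2[OF fmeasurable_cbox _ nbhd_sets] by blast
qed

lemma nbhd_upper:
  assumes "e > 0"
  shows "measure lborel (nbhd (range z) e) \<le> z N + 2*e + 2*e*real N"
proof -
  let ?U = "{-e<..z N + e} \<union> (\<Union>n\<in>{..<N}. {z n - e<..z n + e})"
  have sub: "nbhd (range z) e \<subseteq> ?U"
  proof
    fix y assume "y \<in> nbhd (range z) e"
    then obtain n where d: "dist y (z n) < e" using infdist_obtain unfolding nbhd_def by blast
    show "y \<in> ?U"
    proof (cases "n < N")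
      case True
      have "y \<in> {z n - e<..z n + e}" using d by (auto simp: dist_real_def)
      then show ?thesis using True by blast
    next
      case False
      then have "z n \<le> z N" using z_anti by simp
      then show ?thesis using d z_in[of n] by (auto simp: dist_real_def)
    qed
  qed
  have "measure lborel (nbhd (range z) e) \<le> measure lborel ?U"
  proof (rule measure_mono_fmeasurable[OF sub nbhd_sets])
    show "?U \<in> fmeasurable lborel"
      by (intro fmeasurable.Un fmeasurable.finite_UN Ioc_fmeas) auto
  qed
  also have "\<dots> \<le> measure lborel {-e<..z N + e} + measure lborel (\<Union>n\<in>{..<N}. {z n - e<..z n + e})"
    by (rule measure_Un_le) auto
  also have "measure lborel {-e<..z N + e} = z N + 2*e"
    using z_in[of N] assms by simp
  also have "measure lborel (\<Union>n\<in>{..<N}. {z n - e<..z n + e}) \<le> (\<Sum>n\<in>{..<N}. measure lborel {z n - e<..z n + e})"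
    by (rule measure_UNION_le) auto
  also have "(\<Sum>n\<in>{..<N}. measure lborel {z n - e<..z n + e}) = 2*e*real N"
    using assms by simp
  finally show ?thesis by simp
qed

lemma nbhd_tendsto: "((\<lambda>e. measure lborel (nbhd (range z) e)) \<longlongrightarrow> 0) (at_right 0)"
proof (rule tendstoI)
  fix \<epsilon> :: real assume "\<epsilon> > 0"
  then obtain N where N: "z N < \<epsilon>/2" using z_small[of "\<epsilon>/2"] by auto
  let ?b = "\<epsilon> / (4 * (real N + 1))"
  have b: "?b > 0" using \<open>\<epsilon> > 0\<close> by simp
  have "\<forall>e>0. e < ?b \<longrightarrow> dist (measure lborel (nbhd (range z) e)) 0 < \<epsilon>"
  proof (intro allI impI)
    fix e :: real assume e: "e > 0" "e < ?b"
    have "2*e*(real N + 1) < 2 * ?b * (real N + 1)"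
      using e by (intro mult_strict_right_mono) auto
    also have "\<dots> = \<epsilon>/2" by (simp add: field_simps)
    finally have "2*e*(real N + 1) < \<epsilon>/2" .
    then have "measure lborel (nbhd (range z) e) < \<epsilon>"
      using nbhd_upper[OF e(1), of N] N by (simp add: algebra_simps)
    then show "dist (measure lborel (nbhd (range z) e)) 0 < \<epsilon>" by simp
  qed
  then show "\<forall>\<^sub>F e in at_right 0. dist (measure lborel (nbhd (range z) e)) 0 < \<epsilon>"
    using eventually_at_right[of 0 ?b] b by blast
qed

lemma pointwise:
  assumes C: "C > 0" and d: "\<delta> > 0" and al: "\<alpha> \<ge> 2"
    and fb: "\<forall>u. 0 < u \<and> u < \<delta> \<longrightarrow> f u \<le> C * u powr \<alpha>"
  shows "\<exists>a>0. \<forall>y. 0 < y \<and> y \<le> a \<longrightarrow> infdist y (range z) \<le> C * (2*y) powr \<alpha>"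
proof -
  define \<delta>0 where "\<delta>0 = min \<delta> (min 1 (1/(2*C)))"
  have d0: "\<delta>0 > 0" using C d by (simp add: \<delta>0_def)
  have half: "f u \<le> u/2" if u: "0 < u" "u < \<delta>0" for u
  proof -
    have "f u \<le> C * u powr \<alpha>" using fb u by (simp add: \<delta>0_def)
    also have "u powr \<alpha> \<le> u powr 2"
      using u al by (intro powr_mono') (auto simp: \<delta>0_def)
    also have "u powr 2 = u * u" using u by (simp add: powr_numeral power2_eq_square)
    finally have f1: "f u \<le> C * (u * u)" using C by (simp add: mult_left_mono)
    have cu: "C * u \<le> 1/2"
    proof -
      have "u \<le> 1/(2*C)" using u by (simp add: \<delta>0_def)
      then have "C * u \<le> C * (1/(2*C))" using C by (intro mult_left_mono) auto
      then show ?thesis using C by simp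
    qed
    have "(C * u) * u \<le> (1/2) * u" using u cu by (intro mult_right_mono) auto
    then show ?thesis using f1 by (simp add: mult.assoc)
  qed
  obtain K where K: "z K < \<delta>0" using z_small[OF d0] by blast
  have aK: "z K > 0" using z_in[of K] by simp
  have "\<forall>y. 0 < y \<and> y \<le> z K \<longrightarrow> infdist y (range z) \<le> C * (2*y) powr \<alpha>"
  proof (intro allI impI)
    fix y assume y: "0 < y \<and> y \<le> z K"
    then obtain k where k: "k \<ge> K" "z (Suc k) < y" "y \<le> z k" using bracket by blast
    have zk: "0 < z k" "z k < \<delta>0" using z_in[of k] z_anti[OF k(1)] K by auto
    have "infdist y (range z) \<le> dist y (z k)" by (rule infdist_le) simp
    also have "\<dots> = z k - y" using k by (simp add: dist_real_def)
    also have "\<dots> \<le> f (z k)" using k zS[of k] by simp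
    also have "\<dots> \<le> C * (z k) powr \<alpha>" using fb zk by (simp add: \<delta>0_def)
    also have "\<dots> \<le> C * (2*y) powr \<alpha>"
    proof -
      have "z k \<le> 2*y" using half[OF zk] zS[of k] k by simp
      then show ?thesis using C zk al by (intro mult_left_mono powr_mono2) auto
    qed
    finally show "infdist y (range z) \<le> C * (2*y) powr \<alpha>" .
  qed
  then show ?thesis using aK by blast
qed

lemma meas_lower:
  assumes C: "C > 0" and a: "a > 0" and al: "\<alpha> > 0" and e: "e > 0"
    and pw: "\<forall>y. 0 < y \<and> y \<le> a \<longrightarrow> infdist y (range z) \<le> C * (2*y) powr \<alpha>"
  shows "min a ((e/C) powr (1/\<alpha>) / 4) \<le> measure lborel (nbhd (range z) e)"
proof -
  define q where "q = (e/C) powr (1/\<alpha>)"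
  have q: "q > 0" using e C by (simp add: q_def)
  define m where "m = min a (q/4)"
  have m: "m > 0" using a q by (simp add: m_def)
  have sub: "{0<..m} \<subseteq> nbhd (range z) e"
  proof
    fix y assume y: "y \<in> {0<..m}"
    then have y1: "0 < y" "y \<le> a" "2*y < q" using q by (auto simp: m_def)
    have "(2*y) powr \<alpha> < q powr \<alpha>" using y1 al by (intro powr_less_mono2) auto
    also have "q powr \<alpha> = e/C" using e C al by (simp add: q_def powr_powr)
    finally have "C * (2*y) powr \<alpha> < e" using C by (simp add: field_simps)
    then show "y \<in> nbhd (range z) e" using pw y1 by (force simp: nbhd_def)
  qed
  have "measure lborel {0<..m} \<le> measure lborel (nbhd (range z) e)"
    by (rule measure_mono_fmeasurable[OF sub _ nbhd_fmeas[OF e]]) simp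
  then show ?thesis using m by (simp add: m_def q_def)
qed

end


lemma E_at_right: "eventually P (at_right (0::real)) = (\<exists>b>0. \<forall>y>0. y < b \<longrightarrow> P y)"
  using eventually_at_right[of 0 "1::real"] by simp

lemma ratio_lower:
  assumes loc: "seqsetup r f z" and s: "0 \<le> s" "s < 1"
    and big: "\<forall>\<alpha>>1. f \<in> O[at_right 0](\<lambda>t. t powr \<alpha>)"
  shows "\<exists>c>0. \<forall>e. 0 < e \<and> e < 1 \<longrightarrow>
           c \<le> measure lborel (nbhd (range z) e) / e powr (1 - s)"
proof -
  interpret seqsetup r f z by (rule loc)
  define \<alpha> where "\<alpha> = 2 / (1 - s)"
  have al2: "\<alpha> \<ge> 2" using s by (simp add: \<alpha>_def field_simps)
  have ainv: "1/\<alpha> = (1 - s)/2" using s by (simp add: \<alpha>_def)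
  have "f \<in> O[at_right 0](\<lambda>t. t powr \<alpha>)" using big al2 by simp
  then obtain C where C: "C > 0" and ev: "\<forall>\<^sub>F t in at_right 0. norm (f t) \<le> C * norm (t powr \<alpha>)"
    by (elim landau_o.bigE)
  obtain b where b: "b > 0" and bb: "\<forall>t>0. t < b \<longrightarrow> norm (f t) \<le> C * norm (t powr \<alpha>)"
    using ev unfolding E_at_right by blast
  have fb: "\<forall>u. 0 < u \<and> u < b \<longrightarrow> f u \<le> C * u powr \<alpha>"
  proof (intro allI impI)
    fix u assume u: "0 < u \<and> u < b"
    then have "norm (f u) \<le> C * norm (u powr \<alpha>)" using bb by blast
    then show "f u \<le> C * u powr \<alpha>" using u by simp
  qed
  obtain a where a: "a > 0" and pw: "\<forall>y. 0 < y \<and> y \<le> a \<longrightarrow> infdist y (range z) \<le> C * (2*y) powr \<alpha>"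
    using pointwise[OF C b al2 fb] by blast
  define c where "c = min a (1 / (4 * C powr (1/\<alpha>)))"
  have c: "c > 0" using a C by (simp add: c_def)
  have "c \<le> measure lborel (nbhd (range z) e) / e powr (1 - s)" if e: "0 < e" "e < 1" for e
  proof -
    define p where "p = e powr (1 - s)"
    have p: "0 < p" "p \<le> 1" using e s by (auto simp: p_def intro: powr_le1)
    have ep: "p \<le> e powr (1/\<alpha>)" unfolding p_def ainv using e s by (intro powr_mono') auto
    have M: "min a ((e/C) powr (1/\<alpha>) / 4) \<le> measure lborel (nbhd (range z) e)"
      using meas_lower[OF C a _ e(1) pw] al2 by simp
    have q: "(e/C) powr (1/\<alpha>) = e powr (1/\<alpha>) / C powr (1/\<alpha>)"
      by (rule powr_divide)
    have Cp: "C powr (1/\<alpha>) > 0" using C by simp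
    have "p * c \<le> min a ((e/C) powr (1/\<alpha>) / 4)"
    proof -
      have "p * c \<le> p * a" using p c_def by (intro mult_left_mono) auto
      also have "\<dots> \<le> a" using p a by (simp add: mult_left_le_one_le)
      finally have 1: "p * c \<le> a" .
      have "p * c \<le> p * (1 / (4 * C powr (1/\<alpha>)))" using p c_def by (intro mult_left_mono) auto
      also have "\<dots> = p / (4 * C powr (1/\<alpha>))" by simp
      also have "\<dots> \<le> e powr (1/\<alpha>) / (4 * C powr (1/\<alpha>))"
        using ep Cp by (intro divide_right_mono) auto
      also have "\<dots> = (e/C) powr (1/\<alpha>) / 4" using q by simp
      finally have 2: "p * c \<le> (e/C) powr (1/\<alpha>) / 4" .
      show ?thesis using 1 2 by simp
    qed
    then have "p * c \<le> measure lborel (nbhd (range z) e)" using M by linarith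
    then show ?thesis using p by (simp add: p_def[symmetric] pos_le_divide_eq mult.commute)
  qed
  then show ?thesis using c by blast
qed

theorem theorem6:
  fixes r :: real and f :: "real \<Rightarrow> real" and x :: "nat \<Rightarrow> real"
  assumes "r > 0"
    and "\<forall>t\<in>{0<..<r}. 0 < f t \<and> f t < t"
    and "mono_on {0<..<r} f"
    and "\<forall>\<alpha>>1. f \<in> O[at_right 0](\<lambda>t. t powr \<alpha>)"
    and "x 1 \<in> {0<..<r}"
    and "\<forall>n\<ge>1. x (Suc n) = x n - f (x n)"
  shows "has_box_dim (x ` {1..}) 1"
proof -
  define z where "z = (\<lambda>n. x (Suc n))"
  have S: "x ` {1..} = range z"
  proof
    show "x ` {1..} \<subseteq> range z"
    proof
      fix y assume "y \<in> x ` {1..}"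
      then obtain n where n: "n \<ge> 1" "y = x n" by auto
      then have "y = z (n - 1)" by (simp add: z_def)
      then show "y \<in> range z" by simp
    qed
  next
    show "range z \<subseteq> x ` {1..}" by (auto simp: z_def)
  qed
  have loc: "seqsetup r f z"
    by unfold_locales (use assms in \<open>auto simp: z_def\<close>)
  interpret seqsetup r f z by (rule loc)
  let ?S = "range z"
  have F: "at_right (0::real) \<noteq> bot" by simp
  have t1: "((\<lambda>e. ereal (measure lborel (nbhd ?S e) / e powr (1 - 1))) \<longlongrightarrow> 0) (at_right 0)"
  proof -
    have "((\<lambda>e. ereal (measure lborel (nbhd ?S e))) \<longlongrightarrow> ereal 0) (at_right 0)"
      using nbhd_tendsto by (simp only: lim_ereal)
    moreover have "\<forall>\<^sub>F e in at_right 0. ereal (measure lborel (nbhd ?S e)) =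
                      ereal (measure lborel (nbhd ?S e) / e powr (1 - 1))"
      unfolding E_at_right by (rule exI[of _ 1]) simp
    ultimately show ?thesis by (simp add: zero_ereal_def tendsto_cong)
  qed
  have up1: "upper_mink 1 ?S = 0" unfolding upper_mink_def by (rule lim_imp_Limsup[OF F t1])
  have lo1: "lower_mink 1 ?S = 0" unfolding lower_mink_def by (rule lim_imp_Liminf[OF F t1])
  have ne: "lower_mink s ?S \<noteq> 0 \<and> upper_mink s ?S \<noteq> 0" if s: "0 \<le> s" "s < 1" for s
  proof -
    obtain c where c: "c > 0" and cb: "\<forall>e. 0 < e \<and> e < 1 \<longrightarrow>
           c \<le> measure lborel (nbhd ?S e) / e powr (1 - s)"
      using ratio_lower[OF loc s assms(4)] by blast
    have "\<forall>\<^sub>F e in at_right 0. ereal c \<le> ereal (measure lborel (nbhd ?S e) / e powr (1 - s))"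
      unfolding E_at_right using cb by (intro exI[of _ 1]) auto
    then have lo: "ereal c \<le> lower_mink s ?S" unfolding lower_mink_def by (rule Liminf_bounded)
    have "lower_mink s ?S \<le> upper_mink s ?S"
      unfolding lower_mink_def upper_mink_def by (rule Liminf_le_Limsup[OF F])
    note le = this
    have cpos: "0 < ereal c" using c by simp
    have l0: "0 < lower_mink s ?S" using less_le_trans[OF cpos lo] .
    have u0: "0 < upper_mink s ?S" using less_le_trans[OF l0 le] .
    show ?thesis using l0 u0 by auto
  qed
  have U: "upper_box_dim ?S = 1" unfolding upper_box_dim_def
  proof (rule cInf_eq_minimum)
    show "1 \<in> {s. 0 \<le> s \<and> upper_mink s ?S = 0}" using up1 by simp
  next
    fix s assume "s \<in> {s. 0 \<le> s \<and> upper_mink s ?S = 0}"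
    then show "1 \<le> s" using ne[of s] by force
  qed
  have L: "lower_box_dim ?S = 1" unfolding lower_box_dim_def
  proof (rule cInf_eq_minimum)
    show "1 \<in> {s. 0 \<le> s \<and> lower_mink s ?S = 0}" using lo1 by simp
  next
    fix s assume "s \<in> {s. 0 \<le> s \<and> lower_mink s ?S = 0}"
    then show "1 \<le> s" using ne[of s] by force
  qed
  show ?thesis unfolding S has_box_dim_def using U L by simp
qed

end
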